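(* Let $N\geq3$, $2^*=\frac{2N}{N-2}$, let $\Omega\subset\mathbb{R}^N$ be a bounded smooth domain star-shaped with respect to the origin, and let $f\in C(\mathbb{R},\mathbb{R})$, $f(0)=0$, satisfy: there exist $2+\frac4N<\alpha\leq\beta<2^*$ with $0<\alpha F(u)\leq f(u)u\leq\beta F(u)$ for all $u\neq0$, where $F(u)=\int_0^uf(s)ds$. Let $c>0$. Then $\inf_{u\in\mathcal G}E(u)>0$, and every sequence $\{u_n\}\subset\mathcal G$ with $\limsup_{n\to\infty}E(u_n)<+\infty$ is bounded in $H_0^1(\Omega)$.
   Context: $u^+=\max\{u,0\}$; $f_+(t)=f(t)$ for $t\geq0$ and $f_+(t)=0$ for $t<0$; $F_+(t)=\int_0^tf_+(s)ds$. $S_c^+=\{u\in H_0^1(\Omega):\int_\Omega|u^+|^2dx=c\}$, $E(u)=\frac12\int_\Omega|\nabla u|^2dx-\int_\Omega F_+(u)dx$, and $\mathcal G=\{u\in S_c^+:\int_\Omega|\nabla u|^2dx>\frac N2\int_\Omega f_+(u)u^+dx-N\int_\Omega F_+(u)dx\}$. *)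

theory Defs
  imports "HOL-Analysis.Analysis" "HOL-Library.Liminf_Limsup"
begin

text \<open>f is C-infinity on U: f is differentiable on U and every first partial
  derivative is again C-infinity on U (coinductively: partial derivatives of all orders exist).\<close>
coinductive smooth_on :: "'a::euclidean_space set \<Rightarrow> ('a \<Rightarrow> real) \<Rightarrow> bool" where
  "f differentiable_on U \<Longrightarrow> (\<forall>i\<in>Basis. smooth_on U (\<lambda>x. frechet_derivative f (at x) i))
     \<Longrightarrow> smooth_on U f"

definition sgrad :: "('a::euclidean_space \<Rightarrow> real) \<Rightarrow> 'a \<Rightarrow> 'a" where
  "sgrad \<phi> x = (\<Sum>i\<in>Basis. frechet_derivative \<phi> (at x) i *\<^sub>R i)"

definition test_fun :: "'a::euclidean_space set \<Rightarrow> ('a \<Rightarrow> real) \<Rightarrow> bool" where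
  "test_fun \<Omega> \<phi> \<longleftrightarrow> smooth_on UNIV \<phi> \<and> compact (closure {x. \<phi> x \<noteq> 0})
      \<and> closure {x. \<phi> x \<noteq> 0} \<subseteq> \<Omega>"

definition smooth_bounded_domain :: "'a::euclidean_space set \<Rightarrow> bool" where
  "smooth_bounded_domain \<Omega> \<longleftrightarrow> open \<Omega> \<and> connected \<Omega> \<and> \<Omega> \<noteq> {} \<and> bounded \<Omega> \<and>
     (\<forall>p\<in>frontier \<Omega>. \<exists>r>0. \<exists>\<rho>. smooth_on UNIV \<rho> \<and> (\<forall>x\<in>ball p r. sgrad \<rho> x \<noteq> 0) \<and>
        \<Omega> \<inter> ball p r = {x\<in>ball p r. \<rho> x < 0})"

definition star_shaped_origin :: "'a::real_vector set \<Rightarrow> bool" where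
  "star_shaped_origin \<Omega> \<longleftrightarrow> (\<forall>x\<in>\<Omega>. closed_segment 0 x \<subseteq> \<Omega>)"

definition weak_grad :: "'a::euclidean_space set \<Rightarrow> ('a \<Rightarrow> real) \<Rightarrow> ('a \<Rightarrow> 'a) \<Rightarrow> bool" where
  "weak_grad \<Omega> u G \<longleftrightarrow> set_borel_measurable lebesgue \<Omega> G \<and>
     set_integrable lebesgue \<Omega> (\<lambda>x. (norm (G x))\<^sup>2) \<and>
     (\<forall>\<phi>. test_fun \<Omega> \<phi> \<longrightarrow> (\<forall>i\<in>Basis.
        (LINT x:\<Omega>|lebesgue. u x * (sgrad \<phi> x \<bullet> i)) = - (LINT x:\<Omega>|lebesgue. (G x \<bullet> i) * \<phi> x)))"

text \<open>H_0^1(Omega): closure of the test functions in the H^1 norm.\<close>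
definition H01 :: "'a::euclidean_space set \<Rightarrow> ('a \<Rightarrow> real) set" where
  "H01 \<Omega> = {u. set_borel_measurable lebesgue \<Omega> u \<and> set_integrable lebesgue \<Omega> (\<lambda>x. (u x)\<^sup>2) \<and>
     (\<exists>G. weak_grad \<Omega> u G \<and> (\<exists>\<phi>::nat \<Rightarrow> 'a \<Rightarrow> real. (\<forall>k. test_fun \<Omega> (\<phi> k)) \<and>
        (\<lambda>k. LINT x:\<Omega>|lebesgue. (\<phi> k x - u x)\<^sup>2) \<longlonglongrightarrow> 0 \<and>
        (\<lambda>k. LINT x:\<Omega>|lebesgue. (norm (sgrad (\<phi> k) x - G x))\<^sup>2) \<longlonglongrightarrow> 0))}"

definition wgrad :: "'a::euclidean_space set \<Rightarrow> ('a \<Rightarrow> real) \<Rightarrow> 'a \<Rightarrow> 'a" where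
  "wgrad \<Omega> u = (SOME G. weak_grad \<Omega> u G)"

definition dirichlet :: "'a::euclidean_space set \<Rightarrow> ('a \<Rightarrow> real) \<Rightarrow> real" where
  "dirichlet \<Omega> u = (LINT x:\<Omega>|lebesgue. (norm (wgrad \<Omega> u x))\<^sup>2)"

definition H1_norm2 :: "'a::euclidean_space set \<Rightarrow> ('a \<Rightarrow> real) \<Rightarrow> real" where
  "H1_norm2 \<Omega> u = (LINT x:\<Omega>|lebesgue. (u x)\<^sup>2) + dirichlet \<Omega> u"

definition prim :: "(real \<Rightarrow> real) \<Rightarrow> real \<Rightarrow> real" where
  "prim f t = (if 0 \<le> t then integral {0..t} f else - integral {t..0} f)"

definition fplus :: "(real \<Rightarrow> real) \<Rightarrow> real \<Rightarrow> real" where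
  "fplus f t = (if 0 \<le> t then f t else 0)"

definition Fplus :: "(real \<Rightarrow> real) \<Rightarrow> real \<Rightarrow> real" where
  "Fplus f = prim (fplus f)"

definition Sc_plus :: "'a::euclidean_space set \<Rightarrow> real \<Rightarrow> ('a \<Rightarrow> real) set" where
  "Sc_plus \<Omega> c = {u\<in>H01 \<Omega>. (LINT x:\<Omega>|lebesgue. (max (u x) 0)\<^sup>2) = c}"

definition energy :: "'a::euclidean_space set \<Rightarrow> (real \<Rightarrow> real) \<Rightarrow> ('a \<Rightarrow> real) \<Rightarrow> real" where
  "energy \<Omega> f u = dirichlet \<Omega> u / 2 - (LINT x:\<Omega>|lebesgue. Fplus f (u x))"

definition Gset :: "'a::euclidean_space set \<Rightarrow> (real \<Rightarrow> real) \<Rightarrow> real \<Rightarrow> ('a \<Rightarrow> real) set" where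
  "Gset \<Omega> f c = {u\<in>Sc_plus \<Omega> c.
     dirichlet \<Omega> u > real DIM('a) / 2 * (LINT x:\<Omega>|lebesgue. fplus f (u x) * max (u x) 0)
                      - real DIM('a) * (LINT x:\<Omega>|lebesgue. Fplus f (u x))}"

end

theory Submission
  imports Defs
begin


lemma real_cs_aux:
  fixes X A B :: real
  assumes A: "A \<ge> 0" and B: "B \<ge> 0" and H: "\<And>t. t > 0 \<Longrightarrow> X \<le> t / 2 * A + B / (2 * t)"
  shows "X \<le> sqrt A * sqrt B"
proof (cases "A = 0 \<or> B = 0")
  case True
  show ?thesis
  proof (rule ccontr)
    assume "\<not> ?thesis"
    with True have X: "X > 0" by auto
    show False
    proof (cases "A = 0")
      case True
      have "X \<le> B / (2 * ((B + 1) / X))" using H[of "(B+1)/X"] X B True by auto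
      also have "\<dots> = B * X / (2 * (B + 1))" using X B by (simp add: field_simps)
      also have "\<dots> < X" using X B proof -
        have "B * X \<ge> 0" using X B by simp
        then show ?thesis using X B by (simp add: field_simps add_nonneg_pos)
      qed
      finally show False by simp
    next
      case False
      then have B0: "B = 0" using \<open>A = 0 \<or> B = 0\<close> by auto
      have "X \<le> (X / (A + 1)) / 2 * A" using H[of "X/(A+1)"] X A B0 by auto
      also have "\<dots> = A * X / (2 * (A + 1))" using X A by (simp add: field_simps)
      also have "\<dots> < X" using X A by (simp add: field_simps add_nonneg_pos)
      finally show False by simp
    qed
  qed
next
  case False
  then have A0: "A > 0" and B0: "B > 0" using A B by auto
  define t where "t = sqrt B / sqrt A"
  have t: "t > 0" using A0 B0 by (simp add: t_def)
  have "X \<le> t / 2 * A + B / (2 * t)" using H t by auto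
  also have "t / 2 * A = sqrt A * sqrt B / 2"
    using A0 B0 by (simp add: t_def field_simps)
  also have "B / (2 * t) = sqrt A * sqrt B / 2"
    using A0 B0 by (simp add: t_def field_simps)
  finally show ?thesis by simp
qed

lemma L2_mult_integrable:
  fixes f g :: "'a \<Rightarrow> real"
  assumes [measurable]: "f \<in> borel_measurable M" "g \<in> borel_measurable M"
    and "integrable M (\<lambda>x. (f x)\<^sup>2)" "integrable M (\<lambda>x. (g x)\<^sup>2)"
  shows "integrable M (\<lambda>x. f x * g x)"
proof (rule Bochner_Integration.integrable_bound)
  show "integrable M (\<lambda>x. (f x)\<^sup>2 + (g x)\<^sup>2)" using assms by auto
  show "AE x in M. norm (f x * g x) \<le> norm ((f x)\<^sup>2 + (g x)\<^sup>2)"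
  proof (intro AE_I2)
    fix x
    have "0 \<le> (\<bar>f x\<bar> - \<bar>g x\<bar>)\<^sup>2" by simp
    then have "2 * (\<bar>f x\<bar> * \<bar>g x\<bar>) \<le> (f x)\<^sup>2 + (g x)\<^sup>2"
      by (simp add: power2_eq_square abs_mult algebra_simps)
    moreover have "0 \<le> \<bar>f x\<bar> * \<bar>g x\<bar>" by simp
    ultimately have "\<bar>f x\<bar> * \<bar>g x\<bar> \<le> (f x)\<^sup>2 + (g x)\<^sup>2" by linarith
    then show "norm (f x * g x) \<le> norm ((f x)\<^sup>2 + (g x)\<^sup>2)"
      by (simp add: abs_mult)
  qed
qed auto

lemma L2_CS:
  fixes f g :: "'a \<Rightarrow> real"
  assumes [measurable]: "f \<in> borel_measurable M" "g \<in> borel_measurable M"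
    and If: "integrable M (\<lambda>x. (f x)\<^sup>2)" and Ig: "integrable M (\<lambda>x. (g x)\<^sup>2)"
  shows "(\<integral>x. \<bar>f x * g x\<bar> \<partial>M) \<le> sqrt (\<integral>x. (f x)\<^sup>2 \<partial>M) * sqrt (\<integral>x. (g x)\<^sup>2 \<partial>M)"
proof (rule real_cs_aux)
  show "0 \<le> (\<integral>x. (f x)\<^sup>2 \<partial>M)" "0 \<le> (\<integral>x. (g x)\<^sup>2 \<partial>M)" by auto
  fix t :: real assume t: "t > 0"
  have Ifg: "integrable M (\<lambda>x. \<bar>f x * g x\<bar>)"
    using L2_mult_integrable[OF assms] by auto
  have "(\<integral>x. \<bar>f x * g x\<bar> \<partial>M) \<le> (\<integral>x. t / 2 * (f x)\<^sup>2 + (g x)\<^sup>2 / (2 * t) \<partial>M)"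
  proof (rule integral_mono)
    show "integrable M (\<lambda>x. t / 2 * (f x)\<^sup>2 + (g x)\<^sup>2 / (2 * t))" using If Ig by auto
    fix x
    have "0 \<le> (t * \<bar>f x\<bar> - \<bar>g x\<bar>)\<^sup>2" by simp
    then have "2 * t * \<bar>f x * g x\<bar> \<le> t * t * (f x)\<^sup>2 + (g x)\<^sup>2"
      by (simp add: power2_eq_square abs_mult algebra_simps)
    then show "\<bar>f x * g x\<bar> \<le> t / 2 * (f x)\<^sup>2 + (g x)\<^sup>2 / (2 * t)"
      using t by (simp add: field_simps power2_eq_square)
  qed (use Ifg in auto)
  also have "\<dots> = t / 2 * (\<integral>x. (f x)\<^sup>2 \<partial>M) + (\<integral>x. (g x)\<^sup>2 \<partial>M) / (2 * t)"
    using If Ig by simp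
  finally show "(\<integral>x. \<bar>f x * g x\<bar> \<partial>M) \<le> t / 2 * (\<integral>x. (f x)\<^sup>2 \<partial>M) + (\<integral>x. (g x)\<^sup>2 \<partial>M) / (2 * t)" .
qed

lemma L2_conv:
  fixes a b :: "'a \<Rightarrow> real" and ak :: "nat \<Rightarrow> 'a \<Rightarrow> real"
  assumes [measurable]: "a \<in> borel_measurable M" "b \<in> borel_measurable M" "\<And>k. ak k \<in> borel_measurable M"
    and Ia: "integrable M (\<lambda>x. (a x)\<^sup>2)" and Ib: "integrable M (\<lambda>x. (b x)\<^sup>2)"
    and Iak: "\<And>k. integrable M (\<lambda>x. (ak k x)\<^sup>2)"
    and lim: "(\<lambda>k. \<integral>x. (ak k x - a x)\<^sup>2 \<partial>M) \<longlonglongrightarrow> 0"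
  shows "(\<lambda>k. \<integral>x. ak k x * b x \<partial>M) \<longlonglongrightarrow> (\<integral>x. a x * b x \<partial>M)"
proof -
  have Id: "integrable M (\<lambda>x. (ak k x - a x)\<^sup>2)" for k
  proof (rule Bochner_Integration.integrable_bound)
    show "integrable M (\<lambda>x. 2 * (ak k x)\<^sup>2 + 2 * (a x)\<^sup>2)" using Ia Iak by auto
    show "AE x in M. norm ((ak k x - a x)\<^sup>2) \<le> norm (2 * (ak k x)\<^sup>2 + 2 * (a x)\<^sup>2)"
    proof (intro AE_I2)
      fix x
      have "0 \<le> (ak k x + a x)\<^sup>2" by simp
      moreover have "0 \<le> (ak k x - a x)\<^sup>2" by simp
      ultimately show "norm ((ak k x - a x)\<^sup>2) \<le> norm (2 * (ak k x)\<^sup>2 + 2 * (a x)\<^sup>2)"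
        proof -
        have e: "(ak k x - a x)\<^sup>2 \<le> 2 * (ak k x)\<^sup>2 + 2 * (a x)\<^sup>2"
          using \<open>0 \<le> (ak k x + a x)\<^sup>2\<close> by (simp add: power2_eq_square algebra_simps)
        show ?thesis using e \<open>0 \<le> (ak k x - a x)\<^sup>2\<close> by simp
      qed
    qed
  qed auto
  have Iab: "integrable M (\<lambda>x. a x * b x)" by (rule L2_mult_integrable) (use Ia Ib in auto)
  have Iakb: "integrable M (\<lambda>x. ak k x * b x)" for k by (rule L2_mult_integrable) (use Iak Ib in auto)
  have bound: "norm ((\<integral>x. ak k x * b x \<partial>M) - (\<integral>x. a x * b x \<partial>M))
      \<le> sqrt (\<integral>x. (ak k x - a x)\<^sup>2 \<partial>M) * sqrt (\<integral>x. (b x)\<^sup>2 \<partial>M)" for k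
  proof -
    have "(\<integral>x. ak k x * b x \<partial>M) - (\<integral>x. a x * b x \<partial>M) = (\<integral>x. (ak k x - a x) * b x \<partial>M)"
      using Iab Iakb by (subst Bochner_Integration.integral_diff[symmetric]) (auto simp: left_diff_distrib)
    also have "norm \<dots> \<le> (\<integral>x. norm ((ak k x - a x) * b x) \<partial>M)"
      by (rule integral_norm_bound)
    also have "\<dots> = (\<integral>x. \<bar>(ak k x - a x) * b x\<bar> \<partial>M)" by simp
    also have "\<dots> \<le> sqrt (\<integral>x. (ak k x - a x)\<^sup>2 \<partial>M) * sqrt (\<integral>x. (b x)\<^sup>2 \<partial>M)"
      by (rule L2_CS[OF _ _ Id Ib]) auto
    finally show ?thesis .
  qed
  have "(\<lambda>k. sqrt (\<integral>x. (ak k x - a x)\<^sup>2 \<partial>M) * sqrt (\<integral>x. (b x)\<^sup>2 \<partial>M)) \<longlonglongrightarrow> sqrt 0 * sqrt (\<integral>x. (b x)\<^sup>2 \<partial>M)"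
    by (intro tendsto_mult tendsto_const tendsto_real_sqrt lim)
  then have "(\<lambda>k. (\<integral>x. ak k x * b x \<partial>M) - (\<integral>x. a x * b x \<partial>M)) \<longlonglongrightarrow> 0"
    using Lim_null_comparison[OF always_eventually[OF allI[OF bound]]] by simp
  then show ?thesis by (rule LIM_zero_cancel)
qed



lemma smooth_diff:
  assumes "smooth_on UNIV \<phi>"
  shows "(\<phi> has_derivative frechet_derivative \<phi> (at x)) (at x)"
proof -
  from assms have "\<phi> differentiable_on UNIV" by (cases rule: smooth_on.cases) auto
  then have "\<phi> differentiable at x" by (simp add: differentiable_on_def)
  then show ?thesis by (simp add: frechet_derivative_works[symmetric])
qed

lemma smooth_partial:
  assumes "smooth_on UNIV \<phi>" "i \<in> Basis"
  shows "smooth_on UNIV (\<lambda>x. frechet_derivative \<phi> (at x) i)"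
  using assms by (cases rule: smooth_on.cases) auto

lemma smooth_lin:
  fixes \<phi> \<psi> :: "'a::euclidean_space \<Rightarrow> real"
  assumes "smooth_on UNIV \<phi>" "smooth_on UNIV \<psi>"
  shows "smooth_on UNIV (\<lambda>x. a * \<phi> x + b * \<psi> x)"
proof -
  define X where "X = (\<lambda>(U::'a set) (g::'a \<Rightarrow> real). U = UNIV \<and> (\<exists>a b \<phi> \<psi>. smooth_on UNIV \<phi> \<and> smooth_on UNIV \<psi>
      \<and> g = (\<lambda>x. a * \<phi> x + b * \<psi> x)))"
  have "X UNIV (\<lambda>x. a * \<phi> x + b * \<psi> x)" using assms unfolding X_def by blast
  then show ?thesis
  proof (rule smooth_on.coinduct[of X])
    fix U g assume "X U g"
    then obtain a b \<phi> \<psi> where U: "U = UNIV" and s: "smooth_on UNIV \<phi>" "smooth_on UNIV \<psi>"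
      and g: "g = (\<lambda>x. a * \<phi> x + b * \<psi> x)" unfolding X_def by blast
    have d: "(g has_derivative (\<lambda>h. a * frechet_derivative \<phi> (at x) h + b * frechet_derivative \<psi> (at x) h)) (at x)" for x
      unfolding g by (intro has_derivative_add has_derivative_mult_right smooth_diff s)
    have fd: "frechet_derivative g (at x) = (\<lambda>h. a * frechet_derivative \<phi> (at x) h + b * frechet_derivative \<psi> (at x) h)" for x
      using frechet_derivative_at[OF d[of x]] by simp
    have "g differentiable_on UNIV" using d unfolding differentiable_on_def differentiable_def by blast
    moreover have "X UNIV (\<lambda>x. frechet_derivative g (at x) i)" if "i \<in> Basis" for i
      unfolding X_def fd using smooth_partial[OF s(1) that] smooth_partial[OF s(2) that] by blast
    ultimately show "\<exists>f U'. U = U' \<and> g = f \<and> f differentiable_on U' \<and> (\<forall>i\<in>Basis. X U' (\<lambda>x. frechet_derivative f (at x) i) \<or> smooth_on U' (\<lambda>x. frechet_derivative f (at x) i))"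
      using U by blast
  qed
qed

lemma smooth_times_coord:
  fixes \<phi> \<psi> :: "'a::euclidean_space \<Rightarrow> real"
  assumes "smooth_on UNIV \<phi>" "smooth_on UNIV \<psi>" 
  shows "smooth_on UNIV (\<lambda>x. \<phi> x * (x \<bullet> i) + \<psi> x)"
proof -
  define X where "X = (\<lambda>(U::'a set) (g::'a \<Rightarrow> real). U = UNIV \<and> (\<exists>\<phi> \<psi>. smooth_on UNIV \<phi> \<and> smooth_on UNIV \<psi>
      \<and> g = (\<lambda>x. \<phi> x * (x \<bullet> i) + \<psi> x)))"
  have "X UNIV (\<lambda>x. \<phi> x * (x \<bullet> i) + \<psi> x)" using assms unfolding X_def by blast
  then show ?thesis
  proof (rule smooth_on.coinduct[of X])
    fix U g assume "X U g"
    then obtain \<phi> \<psi> where U: "U = UNIV" and s: "smooth_on UNIV \<phi>" "smooth_on UNIV \<psi>"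
      and g: "g = (\<lambda>x. \<phi> x * (x \<bullet> i) + \<psi> x)" unfolding X_def by blast
    have d: "(g has_derivative (\<lambda>h. \<phi> x * (h \<bullet> i) + frechet_derivative \<phi> (at x) h * (x \<bullet> i) + frechet_derivative \<psi> (at x) h)) (at x)" for x
      unfolding g by (intro has_derivative_add has_derivative_mult smooth_diff s) (auto intro!: derivative_eq_intros)
    have fd: "frechet_derivative g (at x) = (\<lambda>h. \<phi> x * (h \<bullet> i) + frechet_derivative \<phi> (at x) h * (x \<bullet> i) + frechet_derivative \<psi> (at x) h)" for x
      using frechet_derivative_at[OF d[of x]] by simp
    have "g differentiable_on UNIV" using d unfolding differentiable_on_def differentiable_def by blast
    moreover have "X UNIV (\<lambda>x. frechet_derivative g (at x) j)" if "j \<in> Basis" for j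
    proof -
      have "smooth_on UNIV (\<lambda>x. (j \<bullet> i) * \<phi> x + 1 * frechet_derivative \<psi> (at x) j)"
        by (intro smooth_lin s smooth_partial[OF s(2) that])
      moreover have "(\<lambda>x. frechet_derivative g (at x) j) = (\<lambda>x. frechet_derivative \<phi> (at x) j * (x \<bullet> i) + ((j \<bullet> i) * \<phi> x + 1 * frechet_derivative \<psi> (at x) j))"
        unfolding fd by (auto simp: algebra_simps fun_eq_iff)
      ultimately show ?thesis unfolding X_def using smooth_partial[OF s(1) that] by blast
    qed
    ultimately show "\<exists>f U'. U = U' \<and> g = f \<and> f differentiable_on U' \<and> (\<forall>i\<in>Basis. X U' (\<lambda>x. frechet_derivative f (at x) i) \<or> smooth_on U' (\<lambda>x. frechet_derivative f (at x) i))"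
      using U by blast
  qed
qed



lemma dom_lmeas:
  fixes \<Omega> :: "'a::euclidean_space set"
  assumes "open \<Omega>" "bounded \<Omega>"
  shows "\<Omega> \<in> lmeasurable" "\<Omega> \<in> sets lebesgue" "finite_measure (lebesgue_on \<Omega>)"
proof -
  show "\<Omega> \<in> lmeasurable" using lmeasurable_interior[OF assms(2)] interior_open[OF assms(1)] by simp
  then show "\<Omega> \<in> sets lebesgue" by (rule fmeasurableD)
  show "finite_measure (lebesgue_on \<Omega>)" by (rule finite_measure_lebesgue_on) fact
qed

lemma set_lint_conv:
  fixes f :: "'a::euclidean_space \<Rightarrow> 'b::{banach,second_countable_topology}"
  assumes "\<Omega> \<in> sets lebesgue"
  shows "(LINT x:\<Omega>|lebesgue. f x) = integral\<^sup>L (lebesgue_on \<Omega>) f"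
  unfolding set_lebesgue_integral_def using assms by (simp add: integral_restrict_space)

lemma set_int_conv:
  fixes f :: "'a::euclidean_space \<Rightarrow> 'b::{banach,second_countable_topology}"
  assumes "\<Omega> \<in> sets lebesgue"
  shows "set_integrable lebesgue \<Omega> f \<longleftrightarrow> integrable (lebesgue_on \<Omega>) f"
  unfolding set_integrable_def using assms by (simp add: integrable_restrict_space)

lemma set_meas_conv:
  fixes f :: "'a::euclidean_space \<Rightarrow> 'b::{banach,second_countable_topology}"
  assumes "\<Omega> \<in> sets lebesgue"
  shows "set_borel_measurable lebesgue \<Omega> f \<longleftrightarrow> f \<in> borel_measurable (lebesgue_on \<Omega>)"
  unfolding set_borel_measurable_def using assms by (simp add: borel_measurable_restrict_space_iff)

lemma cont_bounded_on:
  fixes g :: "'a::euclidean_space \<Rightarrow> 'b::real_normed_vector"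
  assumes "continuous_on UNIV g" "bounded \<Omega>"
  shows "\<exists>B. \<forall>x\<in>\<Omega>. norm (g x) \<le> B"
proof -
  obtain R where "\<forall>x\<in>\<Omega>. norm x \<le> R" using assms(2) unfolding bounded_pos by blast
  then have R: "\<Omega> \<subseteq> cball 0 R" by auto
  have "continuous_on (cball 0 R) g" using assms(1) continuous_on_subset subset_UNIV by blast
  then have "compact (g ` cball 0 R)" by (intro compact_continuous_image compact_cball)
  then have "bounded (g ` cball 0 R)" by (rule compact_imp_bounded)
  then obtain B where "\<forall>y\<in>g ` cball 0 R. norm y \<le> B" unfolding bounded_iff by blast
  then show ?thesis using R by blast
qed

lemma cont_L2:
  fixes g :: "'a::euclidean_space \<Rightarrow> real"
  assumes "continuous_on UNIV g" "open \<Omega>" "bounded \<Omega>"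
  shows "g \<in> borel_measurable (lebesgue_on \<Omega>)" "integrable (lebesgue_on \<Omega>) (\<lambda>x. (g x)\<^sup>2)"
proof -
  note D = dom_lmeas[OF assms(2,3)]
  show m: "g \<in> borel_measurable (lebesgue_on \<Omega>)"
    by (rule continuous_imp_measurable_on_sets_lebesgue) (use assms(1) continuous_on_subset D in auto)
  obtain B where B: "\<forall>x\<in>\<Omega>. norm (g x) \<le> B" using cont_bounded_on[OF assms(1,3)] by blast
  show "integrable (lebesgue_on \<Omega>) (\<lambda>x. (g x)\<^sup>2)"
  proof (rule finite_measure.integrable_const_bound[where B = "B\<^sup>2"])
    show "finite_measure (lebesgue_on \<Omega>)" by (rule D)
    show "AE x in lebesgue_on \<Omega>. norm ((g x)\<^sup>2) \<le> B\<^sup>2"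
    proof (rule AE_I2)
      fix x assume "x \<in> space (lebesgue_on \<Omega>)"
      then have "x \<in> \<Omega>" by simp
      then have "\<bar>g x\<bar> \<le> B" using B by auto
      then have "\<bar>g x\<bar> \<le> \<bar>B\<bar>" by linarith
      then have "(g x)\<^sup>2 \<le> B\<^sup>2" by (simp only: abs_le_square_iff)
      then show "norm ((g x)\<^sup>2) \<le> B\<^sup>2" by simp
    qed
    show "(\<lambda>x. (g x)\<^sup>2) \<in> borel_measurable (lebesgue_on \<Omega>)" using m by measurable
  qed
qed

lemma smooth_cont:
  assumes "smooth_on UNIV \<phi>"
  shows "continuous_on UNIV \<phi>"
proof -
  from assms have "\<phi> differentiable_on UNIV" by (cases rule: smooth_on.cases) auto
  then show ?thesis by (rule differentiable_imp_continuous_on)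
qed

lemma sgrad_comp:
  assumes "i \<in> Basis"
  shows "sgrad \<phi> x \<bullet> i = frechet_derivative \<phi> (at x) i"
  unfolding sgrad_def using assms by (simp add: inner_sum_left inner_Basis if_distrib cong: if_cong)

lemma sgrad_cont:
  assumes "smooth_on UNIV \<phi>"
  shows "continuous_on UNIV (sgrad \<phi>)"
  unfolding sgrad_def[abs_def]
  by (intro continuous_on_sum continuous_on_scaleR continuous_on_const smooth_cont smooth_partial[OF assms])

lemma test_times_coord:
  assumes "test_fun \<Omega> \<phi>"
  shows "test_fun \<Omega> (\<lambda>x. \<phi> x * (x \<bullet> i))"
proof -
  have s: "smooth_on UNIV \<phi>" using assms by (simp add: test_fun_def)
  have "smooth_on UNIV (\<lambda>x. \<phi> x * (x \<bullet> i) + (0 * \<phi> x + 0 * \<phi> x))"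
    by (intro smooth_times_coord smooth_lin s)
  then have s2: "smooth_on UNIV (\<lambda>x. \<phi> x * (x \<bullet> i))" by simp
  have sub: "closure {x. \<phi> x * (x \<bullet> i) \<noteq> 0} \<subseteq> closure {x. \<phi> x \<noteq> 0}"
    by (rule closure_mono) auto
  have "compact (closure {x. \<phi> x \<noteq> 0} \<inter> closure {x. \<phi> x * (x \<bullet> i) \<noteq> 0})"
    using assms by (intro compact_Int_closed) (auto simp: test_fun_def)
  then have "compact (closure {x. \<phi> x * (x \<bullet> i) \<noteq> 0})" using sub by (simp add: Int_absorb1)
  moreover have "closure {x. \<phi> x \<noteq> 0} \<subseteq> \<Omega>" using assms by (simp add: test_fun_def)
  ultimately show ?thesis using s2 sub unfolding test_fun_def by blast
qed

lemma fd_times_coord: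
  assumes "smooth_on UNIV \<phi>" "i \<in> Basis"
  shows "frechet_derivative (\<lambda>x. \<phi> x * (x \<bullet> i)) (at x) i = \<phi> x + frechet_derivative \<phi> (at x) i * (x \<bullet> i)"
proof -
  have d: "((\<lambda>x. \<phi> x * (x \<bullet> i)) has_derivative (\<lambda>h. \<phi> x * (h \<bullet> i) + frechet_derivative \<phi> (at x) h * (x \<bullet> i))) (at x)"
    by (rule has_derivative_mult[OF smooth_diff[OF assms(1)] bounded_linear.has_derivative[OF bounded_linear_inner_left has_derivative_ident]])
  show ?thesis using frechet_derivative_at[OF d, symmetric] assms(2) by simp
qed



lemma L2_bound_mult:
  fixes f g :: "'a \<Rightarrow> real"
  assumes [measurable]: "f \<in> borel_measurable M" "g \<in> borel_measurable M"
    and If: "integrable M (\<lambda>x. (f x)\<^sup>2)" and B: "\<And>x. x \<in> space M \<Longrightarrow> \<bar>g x\<bar> \<le> C"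
  shows "integrable M (\<lambda>x. (f x * g x)\<^sup>2)"
proof (rule Bochner_Integration.integrable_bound)
  show "integrable M (\<lambda>x. C\<^sup>2 * (f x)\<^sup>2)" using If by auto
  show "AE x in M. norm ((f x * g x)\<^sup>2) \<le> norm (C\<^sup>2 * (f x)\<^sup>2)"
  proof (rule AE_I2)
    fix x assume x: "x \<in> space M"
    have "\<bar>g x\<bar> \<le> \<bar>C\<bar>" using B[OF x] by linarith
    then have "(g x)\<^sup>2 \<le> C\<^sup>2" by (simp only: abs_le_square_iff)
    then have "(g x)\<^sup>2 * (f x)\<^sup>2 \<le> C\<^sup>2 * (f x)\<^sup>2" by (rule mult_right_mono) simp
    then show "norm ((f x * g x)\<^sup>2) \<le> norm (C\<^sup>2 * (f x)\<^sup>2)" by (simp add: power_mult_distrib mult.commute)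
  qed
qed simp

lemma real_poinc_aux:
  fixes S D R :: real
  assumes "S \<ge> 0" "D \<ge> 0" "S \<le> 2 * \<bar>R\<bar> * sqrt S * sqrt D"
  shows "S \<le> 4 * R\<^sup>2 * D"
proof (cases "S = 0")
  case True then show ?thesis using assms by simp
next
  case False
  then have sS: "sqrt S > 0" using assms by simp
  have "sqrt S * sqrt S \<le> (2 * \<bar>R\<bar> * sqrt D) * sqrt S" using assms by (simp add: ac_simps)
  then have "sqrt S \<le> 2 * \<bar>R\<bar> * sqrt D" using sS by (rule mult_right_le_imp_le)
  then have "(sqrt S)\<^sup>2 \<le> (2 * \<bar>R\<bar> * sqrt D)\<^sup>2" using sS by (intro power_mono) auto
  then show ?thesis using assms by (simp add: power_mult_distrib)
qed



lemma L2_diff: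
  fixes f g :: "'a \<Rightarrow> real"
  assumes [measurable]: "f \<in> borel_measurable M" "g \<in> borel_measurable M"
    and If: "integrable M (\<lambda>x. (f x)\<^sup>2)" and Ig: "integrable M (\<lambda>x. (g x)\<^sup>2)"
  shows "integrable M (\<lambda>x. (f x - g x)\<^sup>2)"
proof (rule Bochner_Integration.integrable_bound)
  show "integrable M (\<lambda>x. 2 * (f x)\<^sup>2 + 2 * (g x)\<^sup>2)" using If Ig by auto
  show "AE x in M. norm ((f x - g x)\<^sup>2) \<le> norm (2 * (f x)\<^sup>2 + 2 * (g x)\<^sup>2)"
  proof (intro AE_I2)
    fix x
    have "0 \<le> (f x + g x)\<^sup>2" by simp
    then have e: "(f x - g x)\<^sup>2 \<le> 2 * (f x)\<^sup>2 + 2 * (g x)\<^sup>2"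
      by (simp add: power2_eq_square algebra_simps)
    have "0 \<le> (f x - g x)\<^sup>2" by simp
    then show "norm ((f x - g x)\<^sup>2) \<le> norm (2 * (f x)\<^sup>2 + 2 * (g x)\<^sup>2)" using e by simp
  qed
qed auto

lemma poincare:
  fixes \<Omega> :: "'a::euclidean_space set" and u :: "'a \<Rightarrow> real"
  assumes op: "open \<Omega>" and bd: "bounded \<Omega>" and R: "\<forall>x\<in>\<Omega>. norm x \<le> R" and u: "u \<in> H01 \<Omega>"
  shows "(LINT x:\<Omega>|lebesgue. (u x)\<^sup>2) \<le> 4 * R\<^sup>2 * dirichlet \<Omega> u"
proof -
  note D = dom_lmeas[OF op bd]
  have sl: "\<Omega> \<in> sets lebesgue" by (rule D(2))
  have fm: "finite_measure (lebesgue_on \<Omega>)" by (rule D(3))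
  from u obtain G \<phi>s where um: "set_borel_measurable lebesgue \<Omega> u"
    and u2: "set_integrable lebesgue \<Omega> (\<lambda>x. (u x)\<^sup>2)" and wG: "weak_grad \<Omega> u G"
    and tf: "\<And>k. test_fun \<Omega> (\<phi>s k)"
    and l1: "(\<lambda>k. LINT x:\<Omega>|lebesgue. (\<phi>s k x - u x)\<^sup>2) \<longlonglongrightarrow> 0"
    and l2: "(\<lambda>k. LINT x:\<Omega>|lebesgue. (norm (sgrad (\<phi>s k) x - G x))\<^sup>2) \<longlonglongrightarrow> 0"
    unfolding H01_def by blast
  define G' where "G' = wgrad \<Omega> u"
  have wG': "weak_grad \<Omega> u G'" unfolding G'_def wgrad_def using someI[of "weak_grad \<Omega> u" G] wG by blast
  obtain i :: 'a where i: "i \<in> Basis" using nonempty_Basis by blast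
  have sm: "smooth_on UNIV (\<phi>s k)" for k using tf[of k] by (simp add: test_fun_def)
  define dk where "dk = (\<lambda>k x. frechet_derivative (\<phi>s k) (at x) i)"
  have smd: "smooth_on UNIV (dk k)" for k unfolding dk_def by (rule smooth_partial[OF sm i])
  have xR: "\<bar>x \<bullet> i\<bar> \<le> R" if "x \<in> \<Omega>" for x
    using Basis_le_norm[OF i, of x] R that by auto

  have um': "u \<in> borel_measurable (lebesgue_on \<Omega>)" using um set_meas_conv[OF sl] by blast
  have u2': "integrable (lebesgue_on \<Omega>) (\<lambda>x. (u x)\<^sup>2)" using u2 set_int_conv[OF sl] by blast
  have wgm: "H \<in> borel_measurable (lebesgue_on \<Omega>)" "integrable (lebesgue_on \<Omega>) (\<lambda>x. (norm (H x))\<^sup>2)"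
    if "weak_grad \<Omega> u H" for H
    using that set_meas_conv[OF sl] set_int_conv[OF sl] unfolding weak_grad_def by blast+
  have wgim: "(\<lambda>x. H x \<bullet> i) \<in> borel_measurable (lebesgue_on \<Omega>)" if "weak_grad \<Omega> u H" for H
    using wgm(1)[OF that] by measurable
  have wgi2: "integrable (lebesgue_on \<Omega>) (\<lambda>x. (H x \<bullet> i)\<^sup>2)" if "weak_grad \<Omega> u H" for H
  proof (rule Bochner_Integration.integrable_bound[OF wgm(2)[OF that]])
    show "(\<lambda>x. (H x \<bullet> i)\<^sup>2) \<in> borel_measurable (lebesgue_on \<Omega>)" using wgim[OF that] by measurable
    show "AE x in lebesgue_on \<Omega>. norm ((H x \<bullet> i)\<^sup>2) \<le> norm ((norm (H x))\<^sup>2)"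
    proof (rule AE_I2)
      fix x
      have "\<bar>H x \<bullet> i\<bar> \<le> \<bar>norm (H x)\<bar>" using Basis_le_norm[OF i, of "H x"] by simp
      then have "(H x \<bullet> i)\<^sup>2 \<le> (norm (H x))\<^sup>2" by (simp only: abs_le_square_iff)
      then show "norm ((H x \<bullet> i)\<^sup>2) \<le> norm ((norm (H x))\<^sup>2)" by simp
    qed
  qed
  have xim: "(\<lambda>x. x \<bullet> i) \<in> borel_measurable (lebesgue_on \<Omega>)"
    by (rule cont_L2(1)[OF _ op bd]) (intro continuous_intros)
  have phim: "\<phi>s k \<in> borel_measurable (lebesgue_on \<Omega>)" "integrable (lebesgue_on \<Omega>) (\<lambda>x. (\<phi>s k x)\<^sup>2)" for k
    using cont_L2[OF smooth_cont[OF sm] op bd] by auto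
  have dkm: "dk k \<in> borel_measurable (lebesgue_on \<Omega>)" "integrable (lebesgue_on \<Omega>) (\<lambda>x. (dk k x)\<^sup>2)" for k
    using cont_L2[OF smooth_cont[OF smd] op bd] by auto
  have sgm: "(\<lambda>x. norm (sgrad (\<phi>s k) x)) \<in> borel_measurable (lebesgue_on \<Omega>)"
     "integrable (lebesgue_on \<Omega>) (\<lambda>x. (norm (sgrad (\<phi>s k) x))\<^sup>2)" for k
    using cont_L2[OF continuous_on_norm[OF sgrad_cont[OF sm]] op bd] by auto
  have sgm': "sgrad (\<phi>s k) \<in> borel_measurable (lebesgue_on \<Omega>)" for k
    by (rule continuous_imp_measurable_on_sets_lebesgue[OF _ sl])
       (rule continuous_on_subset[OF sgrad_cont[OF sm] subset_UNIV])
  have coordL2: "integrable (lebesgue_on \<Omega>) (\<lambda>x. (f x * (x \<bullet> i))\<^sup>2)"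
    if "f \<in> borel_measurable (lebesgue_on \<Omega>)" "integrable (lebesgue_on \<Omega>) (\<lambda>x. (f x)\<^sup>2)" for f
    by (rule L2_bound_mult[OF that(1) xim that(2)]) (use xR in auto)
  have uxm: "(\<lambda>x. u x * (x \<bullet> i)) \<in> borel_measurable (lebesgue_on \<Omega>)" using um' xim by measurable
  have ux2: "integrable (lebesgue_on \<Omega>) (\<lambda>x. (u x * (x \<bullet> i))\<^sup>2)" by (rule coordL2[OF um' u2'])
  have Hxm: "(\<lambda>x. (H x \<bullet> i) * (x \<bullet> i)) \<in> borel_measurable (lebesgue_on \<Omega>)" if "weak_grad \<Omega> u H" for H
    using wgim[OF that] xim by measurable
  have Hx2: "integrable (lebesgue_on \<Omega>) (\<lambda>x. ((H x \<bullet> i) * (x \<bullet> i))\<^sup>2)" if "weak_grad \<Omega> u H" for H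
    by (rule coordL2[OF wgim[OF that] wgi2[OF that]])

  have ident: "(LINT x:\<Omega>|lebesgue. u x * (\<phi>s k x + dk k x * (x \<bullet> i))) = - (LINT x:\<Omega>|lebesgue. (H x \<bullet> i) * (\<phi>s k x * (x \<bullet> i)))"
    if "weak_grad \<Omega> u H" for H k
  proof -
    have tf2: "test_fun \<Omega> (\<lambda>x. \<phi>s k x * (x \<bullet> i))" by (rule test_times_coord[OF tf])
    have e: "sgrad (\<lambda>x. \<phi>s k x * (x \<bullet> i)) x \<bullet> i = \<phi>s k x + dk k x * (x \<bullet> i)" for x
      unfolding sgrad_comp[OF i] dk_def by (rule fd_times_coord[OF sm i])
    from that tf2 i have "(LINT x:\<Omega>|lebesgue. u x * (sgrad (\<lambda>x. \<phi>s k x * (x \<bullet> i)) x \<bullet> i)) = - (LINT x:\<Omega>|lebesgue. (H x \<bullet> i) * (\<phi>s k x * (x \<bullet> i)))"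
      unfolding weak_grad_def by blast
    then show ?thesis unfolding e .
  qed
  define P where "P = (\<lambda>k. \<integral>x. \<phi>s k x * u x \<partial>lebesgue_on \<Omega>)"
  define Q where "Q = (\<lambda>k. \<integral>x. dk k x * (u x * (x \<bullet> i)) \<partial>lebesgue_on \<Omega>)"
  define RR where "RR = (\<lambda>H k. \<integral>x. \<phi>s k x * ((H x \<bullet> i) * (x \<bullet> i)) \<partial>lebesgue_on \<Omega>)"
  have split: "P k + Q k = - RR H k" if "weak_grad \<Omega> u H" for H k
  proof -
    have I1: "integrable (lebesgue_on \<Omega>) (\<lambda>x. \<phi>s k x * u x)" by (rule L2_mult_integrable[OF phim(1) um' phim(2) u2'])
    have I2: "integrable (lebesgue_on \<Omega>) (\<lambda>x. dk k x * (u x * (x \<bullet> i)))" by (rule L2_mult_integrable[OF dkm(1) uxm dkm(2) ux2])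
    have "(LINT x:\<Omega>|lebesgue. u x * (\<phi>s k x + dk k x * (x \<bullet> i))) = (\<integral>x. \<phi>s k x * u x + dk k x * (u x * (x \<bullet> i)) \<partial>lebesgue_on \<Omega>)"
      unfolding set_lint_conv[OF sl] by (rule Bochner_Integration.integral_cong) (auto simp: algebra_simps)
    also have "\<dots> = P k + Q k" unfolding P_def Q_def using I1 I2 by (rule Bochner_Integration.integral_add)
    finally have a: "(LINT x:\<Omega>|lebesgue. u x * (\<phi>s k x + dk k x * (x \<bullet> i))) = P k + Q k" .
    have b: "(LINT x:\<Omega>|lebesgue. (H x \<bullet> i) * (\<phi>s k x * (x \<bullet> i))) = RR H k"
      unfolding set_lint_conv[OF sl] RR_def by (rule Bochner_Integration.integral_cong) (auto simp: ac_simps)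
    show ?thesis using ident[OF that, of k] a b by simp
  qed
  have l1': "(\<lambda>k. \<integral>x. (\<phi>s k x - u x)\<^sup>2 \<partial>lebesgue_on \<Omega>) \<longlonglongrightarrow> 0"
    using l1 unfolding set_lint_conv[OF sl] .
  have limP: "P \<longlonglongrightarrow> (\<integral>x. u x * u x \<partial>lebesgue_on \<Omega>)"
    unfolding P_def by (rule L2_conv[OF um' um' phim(1) u2' u2' phim(2) l1'])
  have limRR: "RR H \<longlonglongrightarrow> (\<integral>x. u x * ((H x \<bullet> i) * (x \<bullet> i)) \<partial>lebesgue_on \<Omega>)" if "weak_grad \<Omega> u H" for H
    unfolding RR_def by (rule L2_conv[OF um' Hxm[OF that] phim(1) u2' Hx2[OF that] phim(2) l1'])
  have ld: "(\<lambda>k. \<integral>x. (dk k x - G x \<bullet> i)\<^sup>2 \<partial>lebesgue_on \<Omega>) \<longlonglongrightarrow> 0"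
  proof (rule tendsto_sandwich[of "\<lambda>_. 0" _ sequentially "\<lambda>k. \<integral>x. (norm (sgrad (\<phi>s k) x - G x))\<^sup>2 \<partial>lebesgue_on \<Omega>"])
    show "\<forall>\<^sub>F k in sequentially. 0 \<le> (\<integral>x. (dk k x - G x \<bullet> i)\<^sup>2 \<partial>lebesgue_on \<Omega>)" by simp
    show "(\<lambda>k. 0::real) \<longlonglongrightarrow> 0" by simp
    show "(\<lambda>k. \<integral>x. (norm (sgrad (\<phi>s k) x - G x))\<^sup>2 \<partial>lebesgue_on \<Omega>) \<longlonglongrightarrow> 0"
      using l2 unfolding set_lint_conv[OF sl] .
    show "\<forall>\<^sub>F k in sequentially. (\<integral>x. (dk k x - G x \<bullet> i)\<^sup>2 \<partial>lebesgue_on \<Omega>) \<le> (\<integral>x. (norm (sgrad (\<phi>s k) x - G x))\<^sup>2 \<partial>lebesgue_on \<Omega>)"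
    proof (rule always_eventually, rule allI, rule integral_mono)
      fix k
      show "integrable (lebesgue_on \<Omega>) (\<lambda>x. (dk k x - G x \<bullet> i)\<^sup>2)"
        by (rule L2_diff[OF dkm(1) wgim[OF wG] dkm(2) wgi2[OF wG]])
      have "integrable (lebesgue_on \<Omega>) (\<lambda>x. (norm (sgrad (\<phi>s k) x) - (- norm (G x)))\<^sup>2)"
        by (rule L2_diff) (use sgm wgm[OF wG] in auto)
      then show "integrable (lebesgue_on \<Omega>) (\<lambda>x. (norm (sgrad (\<phi>s k) x - G x))\<^sup>2)"
      proof (rule Bochner_Integration.integrable_bound)
        show "(\<lambda>x. (norm (sgrad (\<phi>s k) x - G x))\<^sup>2) \<in> borel_measurable (lebesgue_on \<Omega>)"
          using sgm'[of k] wgm(1)[OF wG] by measurable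
        show "AE x in lebesgue_on \<Omega>. norm ((norm (sgrad (\<phi>s k) x - G x))\<^sup>2) \<le> norm ((norm (sgrad (\<phi>s k) x) - - norm (G x))\<^sup>2)"
        proof (rule AE_I2)
          fix x
          have "\<bar>norm (sgrad (\<phi>s k) x - G x)\<bar> \<le> \<bar>norm (sgrad (\<phi>s k) x) - - norm (G x)\<bar>"
            using norm_triangle_ineq4[of "sgrad (\<phi>s k) x" "G x"] by simp
          then have "(norm (sgrad (\<phi>s k) x - G x))\<^sup>2 \<le> (norm (sgrad (\<phi>s k) x) - - norm (G x))\<^sup>2"
            by (simp only: abs_le_square_iff)
          then show "norm ((norm (sgrad (\<phi>s k) x - G x))\<^sup>2) \<le> norm ((norm (sgrad (\<phi>s k) x) - - norm (G x))\<^sup>2)"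
            by simp
        qed
      qed
      fix x
      have "dk k x - G x \<bullet> i = (sgrad (\<phi>s k) x - G x) \<bullet> i"
        unfolding dk_def inner_diff_left sgrad_comp[OF i] ..
      then have "\<bar>dk k x - G x \<bullet> i\<bar> \<le> \<bar>norm (sgrad (\<phi>s k) x - G x)\<bar>"
        using Basis_le_norm[OF i, of "sgrad (\<phi>s k) x - G x"] by simp
      then show "(dk k x - G x \<bullet> i)\<^sup>2 \<le> (norm (sgrad (\<phi>s k) x - G x))\<^sup>2"
        by (simp only: abs_le_square_iff)
    qed
  qed
  have limQ: "Q \<longlonglongrightarrow> (\<integral>x. (G x \<bullet> i) * (u x * (x \<bullet> i)) \<partial>lebesgue_on \<Omega>)"
    unfolding Q_def by (rule L2_conv[OF wgim[OF wG] uxm dkm(1) wgi2[OF wG] ux2 dkm(2) ld])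
  define r where "r = (\<integral>x. u x * ((G' x \<bullet> i) * (x \<bullet> i)) \<partial>lebesgue_on \<Omega>)"
  define S where "S = (\<integral>x. u x * u x \<partial>lebesgue_on \<Omega>)"
  have RReq: "RR G = RR G'" using split[OF wG] split[OF wG'] by (auto simp: fun_eq_iff)
  have rG: "(\<integral>x. u x * ((G x \<bullet> i) * (x \<bullet> i)) \<partial>lebesgue_on \<Omega>) = r"
    unfolding r_def using LIMSEQ_unique[OF limRR[OF wG]] limRR[OF wG'] RReq by simp
  have q: "(\<integral>x. (G x \<bullet> i) * (u x * (x \<bullet> i)) \<partial>lebesgue_on \<Omega>) = r"
    unfolding rG[symmetric] by (rule Bochner_Integration.integral_cong) (auto simp: ac_simps)
  have "(\<lambda>k. P k + Q k) \<longlonglongrightarrow> S + r" unfolding S_def q[symmetric] by (intro tendsto_add limP limQ)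
  moreover have "(\<lambda>k. P k + Q k) \<longlonglongrightarrow> - r"
    unfolding split[OF wG'] r_def by (intro tendsto_minus limRR[OF wG'])
  ultimately have Sr: "S + r = - r" by (rule LIMSEQ_unique)
  define Dm where "Dm = (\<integral>x. (norm (G' x))\<^sup>2 \<partial>lebesgue_on \<Omega>)"
  have Ddef: "dirichlet \<Omega> u = Dm" unfolding dirichlet_def Dm_def G'_def set_lint_conv[OF sl] ..
  have Sdef: "(LINT x:\<Omega>|lebesgue. (u x)\<^sup>2) = S" unfolding S_def set_lint_conv[OF sl] by (simp add: power2_eq_square)
  have "- r \<le> norm r" by simp
  also have "\<dots> \<le> (\<integral>x. norm (u x * ((G' x \<bullet> i) * (x \<bullet> i))) \<partial>lebesgue_on \<Omega>)"
    unfolding r_def by (rule integral_norm_bound)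
  also have "\<dots> = (\<integral>x. \<bar>u x * ((G' x \<bullet> i) * (x \<bullet> i))\<bar> \<partial>lebesgue_on \<Omega>)" by simp
  also have "\<dots> \<le> sqrt (\<integral>x. (u x)\<^sup>2 \<partial>lebesgue_on \<Omega>) * sqrt (\<integral>x. ((G' x \<bullet> i) * (x \<bullet> i))\<^sup>2 \<partial>lebesgue_on \<Omega>)"
    by (rule L2_CS[OF um' Hxm[OF wG'] u2' Hx2[OF wG']])
  finally have c1: "- r \<le> sqrt (\<integral>x. (u x)\<^sup>2 \<partial>lebesgue_on \<Omega>) * sqrt (\<integral>x. ((G' x \<bullet> i) * (x \<bullet> i))\<^sup>2 \<partial>lebesgue_on \<Omega>)" .
  have "(\<integral>x. ((G' x \<bullet> i) * (x \<bullet> i))\<^sup>2 \<partial>lebesgue_on \<Omega>) \<le> (\<integral>x. R\<^sup>2 * (norm (G' x))\<^sup>2 \<partial>lebesgue_on \<Omega>)"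
  proof (rule integral_mono)
    show "integrable (lebesgue_on \<Omega>) (\<lambda>x. ((G' x \<bullet> i) * (x \<bullet> i))\<^sup>2)" by (rule Hx2[OF wG'])
    show "integrable (lebesgue_on \<Omega>) (\<lambda>x. R\<^sup>2 * (norm (G' x))\<^sup>2)" using wgm(2)[OF wG'] by simp
    fix x assume "x \<in> space (lebesgue_on \<Omega>)"
    then have x: "x \<in> \<Omega>" by simp
    have "\<bar>x \<bullet> i\<bar> \<le> \<bar>R\<bar>" using xR[OF x] by linarith
    then have a: "(x \<bullet> i)\<^sup>2 \<le> R\<^sup>2" by (simp only: abs_le_square_iff)
    have "\<bar>G' x \<bullet> i\<bar> \<le> \<bar>norm (G' x)\<bar>" using Basis_le_norm[OF i, of "G' x"] by simp
    then have b: "(G' x \<bullet> i)\<^sup>2 \<le> (norm (G' x))\<^sup>2" by (simp only: abs_le_square_iff)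
    have "(G' x \<bullet> i)\<^sup>2 * (x \<bullet> i)\<^sup>2 \<le> (norm (G' x))\<^sup>2 * R\<^sup>2"
      by (rule mult_mono[OF b a]) auto
    then show "((G' x \<bullet> i) * (x \<bullet> i))\<^sup>2 \<le> R\<^sup>2 * (norm (G' x))\<^sup>2" by (simp add: power_mult_distrib mult.commute)
  qed
  also have "(\<integral>x. R\<^sup>2 * (norm (G' x))\<^sup>2 \<partial>lebesgue_on \<Omega>) = R\<^sup>2 * Dm" unfolding Dm_def by simp
  finally have c2: "(\<integral>x. ((G' x \<bullet> i) * (x \<bullet> i))\<^sup>2 \<partial>lebesgue_on \<Omega>) \<le> R\<^sup>2 * Dm" .
  have "- r \<le> sqrt S * sqrt (R\<^sup>2 * Dm)"
    using c1 mult_left_mono[OF real_sqrt_le_mono[OF c2], of "sqrt S"] unfolding S_def by (simp add: power2_eq_square)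
  then have "- r \<le> sqrt S * (\<bar>R\<bar> * sqrt Dm)" by (simp add: real_sqrt_mult)
  then have "S \<le> 2 * \<bar>R\<bar> * sqrt S * sqrt Dm" using Sr by (simp add: algebra_simps)
  moreover have "S \<ge> 0" unfolding S_def by simp
  moreover have "Dm \<ge> 0" unfolding Dm_def by simp
  ultimately have "S \<le> 4 * R\<^sup>2 * Dm" by (rule real_poinc_aux[rotated 2])
  then show ?thesis using Sdef Ddef by simp
qed


lemma nonlin_pointwise:
  fixes f :: "real \<Rightarrow> real"
  assumes f0: "f 0 = 0" and \<alpha>0: "0 < \<alpha>"
    and AR: "\<forall>u. u \<noteq> 0 \<longrightarrow> 0 < \<alpha> * prim f u \<and> \<alpha> * prim f u \<le> f u * u \<and> f u * u \<le> \<beta> * prim f u"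
  shows "0 \<le> Fplus f t" "\<alpha> * Fplus f t \<le> fplus f t * max t 0" "fplus f t * max t 0 \<le> \<beta> * Fplus f t"
proof -
  have "0 \<le> Fplus f t \<and> \<alpha> * Fplus f t \<le> fplus f t * max t 0 \<and> fplus f t * max t 0 \<le> \<beta> * Fplus f t"
  proof (cases "t > 0")
    case True
    have "integral {0..t} (fplus f) = integral {0..t} f"
      by (rule integral_cong) (auto simp: fplus_def)
    then have F: "Fplus f t = prim f t" using True by (simp add: Fplus_def prim_def)
    have fp: "fplus f t * max t 0 = f t * t" using True by (simp add: fplus_def)
    have "0 < \<alpha> * prim f t" "\<alpha> * prim f t \<le> f t * t" "f t * t \<le> \<beta> * prim f t"
      using AR True by auto
    moreover have "0 < prim f t" using \<open>0 < \<alpha> * prim f t\<close> \<alpha>0 by (simp add: zero_less_mult_iff)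
    ultimately show ?thesis unfolding F fp by auto
  next
    case False
    have z: "integral {t..0} (fplus f) = integral {t..0} (\<lambda>_. 0)"
      by (rule integral_cong) (use f0 in \<open>auto simp: fplus_def\<close>)
    have F: "Fplus f t = 0"
    proof (cases "t = 0")
      case True then show ?thesis by (simp add: Fplus_def prim_def)
    next
      case False
      then show ?thesis using \<open>\<not> t > 0\<close> z by (simp add: Fplus_def prim_def)
    qed
    have fp: "fplus f t * max t 0 = 0" using False by simp
    show ?thesis unfolding F fp by simp
  qed
  then show "0 \<le> Fplus f t" "\<alpha> * Fplus f t \<le> fplus f t * max t 0" "fplus f t * max t 0 \<le> \<beta> * Fplus f t"
    by auto
qed

lemma fplus_meas:
  assumes "continuous_on UNIV f"
  shows "fplus f \<in> borel_measurable borel"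
proof -
  have [measurable]: "f \<in> borel_measurable borel" by (rule borel_measurable_continuous_onI[OF assms])
  show ?thesis unfolding fplus_def[abs_def] by measurable
qed

lemma key:
  fixes \<Omega> :: "'a::euclidean_space set" and f :: "real \<Rightarrow> real" and u :: "'a \<Rightarrow> real"
  assumes op: "open \<Omega>" and bd: "bounded \<Omega>" and R: "\<forall>x\<in>\<Omega>. norm x \<le> R"
    and u: "u \<in> Gset \<Omega> f c"
    and fcont: "continuous_on UNIV f" and f0: "f 0 = 0"
    and \<alpha>: "2 + 4 / real DIM('a) < \<alpha>" and \<alpha>\<beta>: "\<alpha> \<le> \<beta>"
    and AR: "\<forall>u. u \<noteq> 0 \<longrightarrow> 0 < \<alpha> * prim f u \<and> \<alpha> * prim f u \<le> f u * u \<and> f u * u \<le> \<beta> * prim f u"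
  shows "(1/2 - 1 / (real DIM('a) * \<alpha> / 2 - real DIM('a))) * dirichlet \<Omega> u \<le> energy \<Omega> f u"
    "(LINT x:\<Omega>|lebesgue. (u x)\<^sup>2) \<le> 4 * R\<^sup>2 * dirichlet \<Omega> u"
    "c \<le> 4 * R\<^sup>2 * dirichlet \<Omega> u"
proof -
  define N where "N = real DIM('a)"
  have N0: "N > 0" unfolding N_def by simp
  have \<alpha>0: "\<alpha> > 0" using \<alpha> N0 unfolding N_def by (smt (verit) divide_pos_pos)
  define m where "m = N * \<alpha> / 2 - N"
  have "N * \<alpha> > N * (2 + 4 / N)" using \<alpha> N0 unfolding N_def by simp
  moreover have "N * (2 + 4 / N) = 2 * N + 4" using N0 by (simp add: field_simps)
  ultimately have "N * \<alpha> > 2 * N + 4" by simp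
  then have m2: "m > 2" unfolding m_def by simp
  note D = dom_lmeas[OF op bd]
  have sl: "\<Omega> \<in> sets lebesgue" by (rule D(2))
  have uH: "u \<in> H01 \<Omega>" and uc: "(LINT x:\<Omega>|lebesgue. (max (u x) 0)\<^sup>2) = c"
    and uG: "dirichlet \<Omega> u > N / 2 * (LINT x:\<Omega>|lebesgue. fplus f (u x) * max (u x) 0)
                      - N * (LINT x:\<Omega>|lebesgue. Fplus f (u x))"
    using u unfolding Gset_def Sc_plus_def N_def by auto
  have um': "u \<in> borel_measurable (lebesgue_on \<Omega>)" and u2': "integrable (lebesgue_on \<Omega>) (\<lambda>x. (u x)\<^sup>2)"
    using uH set_meas_conv[OF sl] set_int_conv[OF sl] unfolding H01_def by blast+
  note pw = nonlin_pointwise[OF f0 \<alpha>0 AR]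
  define A where "A = (\<integral>x. fplus f (u x) * max (u x) 0 \<partial>lebesgue_on \<Omega>)"
  define B where "B = (\<integral>x. Fplus f (u x) \<partial>lebesgue_on \<Omega>)"
  define Dd where "Dd = dirichlet \<Omega> u"
  have B0: "B \<ge> 0" unfolding B_def by (rule integral_nonneg_AE) (use pw(1) in auto)
  have Am: "(\<lambda>x. fplus f (u x) * max (u x) 0) \<in> borel_measurable (lebesgue_on \<Omega>)"
  proof -
    have [measurable]: "fplus f \<in> borel_measurable borel" by (rule fplus_meas[OF fcont])
    show ?thesis using um' by measurable
  qed
  have AB: "\<alpha> * B \<le> A"
  proof (cases "integrable (lebesgue_on \<Omega>) (\<lambda>x. Fplus f (u x))")
    case True
    have IA: "integrable (lebesgue_on \<Omega>) (\<lambda>x. fplus f (u x) * max (u x) 0)"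
    proof (rule Bochner_Integration.integrable_bound[OF _ Am])
      show "integrable (lebesgue_on \<Omega>) (\<lambda>x. \<beta> * Fplus f (u x))" using True by simp
      show "AE x in lebesgue_on \<Omega>. norm (fplus f (u x) * max (u x) 0) \<le> norm (\<beta> * Fplus f (u x))"
      proof (rule AE_I2)
        fix x
        have "0 \<le> \<alpha> * Fplus f (u x)" using pw(1)[of "u x"] \<alpha>0 by simp
        then show "norm (fplus f (u x) * max (u x) 0) \<le> norm (\<beta> * Fplus f (u x))"
          using pw(2)[of "u x"] pw(3)[of "u x"] by simp
      qed
    qed
    have "\<alpha> * B = (\<integral>x. \<alpha> * Fplus f (u x) \<partial>lebesgue_on \<Omega>)" unfolding B_def by simp
    also have "\<dots> \<le> A" unfolding A_def by (rule integral_mono[OF _ IA]) (use True pw(2) in auto)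
    finally show ?thesis .
  next
    case False
    then have "B = 0" unfolding B_def by (rule not_integrable_integral_eq)
    moreover have "A \<ge> 0" unfolding A_def
    proof (rule integral_nonneg_AE, rule AE_I2)
      fix x show "0 \<le> fplus f (u x) * max (u x) 0" using pw(1)[of "u x"] pw(2)[of "u x"] \<alpha>0 by (smt (verit) mult_nonneg_nonneg)
    qed
    ultimately show ?thesis by simp
  qed
  have G': "Dd > N / 2 * A - N * B"
    using uG unfolding A_def B_def Dd_def set_lint_conv[OF sl] .
  have "N / 2 * (\<alpha> * B) \<le> N / 2 * A" using AB N0 by simp
  then have mB: "m * B < Dd" using G' unfolding m_def by (simp add: algebra_simps)
  have E: "energy \<Omega> f u = Dd / 2 - B" unfolding energy_def Dd_def B_def set_lint_conv[OF sl] ..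
  have "(1/2 - 1/m) * Dd \<le> Dd / 2 - B"
  proof -
    have "B \<le> Dd / m" using mB m2 by (simp add: field_simps)
    moreover have "(1/2 - 1/m) * Dd = Dd / 2 - Dd / m" by (simp add: algebra_simps)
    ultimately show ?thesis by linarith
  qed
  then show "(1/2 - 1 / (real DIM('a) * \<alpha> / 2 - real DIM('a))) * dirichlet \<Omega> u \<le> energy \<Omega> f u"
    unfolding E m_def N_def Dd_def .
  show P: "(LINT x:\<Omega>|lebesgue. (u x)\<^sup>2) \<le> 4 * R\<^sup>2 * dirichlet \<Omega> u"
    by (rule poincare[OF op bd R uH])
  have "c = (\<integral>x. (max (u x) 0)\<^sup>2 \<partial>lebesgue_on \<Omega>)" using uc unfolding set_lint_conv[OF sl] by simp
  also have "\<dots> \<le> (\<integral>x. (u x)\<^sup>2 \<partial>lebesgue_on \<Omega>)"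
  proof (rule integral_mono[OF _ u2'])
    have mm: "(\<lambda>x. (max (u x) 0)\<^sup>2) \<in> borel_measurable (lebesgue_on \<Omega>)" using um' by measurable
    show "integrable (lebesgue_on \<Omega>) (\<lambda>x. (max (u x) 0)\<^sup>2)"
    proof (rule Bochner_Integration.integrable_bound[OF u2' mm], intro AE_I2)
      fix x
      have "\<bar>max (u x) 0\<bar> \<le> \<bar>u x\<bar>" by simp
      then have "(max (u x) 0)\<^sup>2 \<le> (u x)\<^sup>2" by (simp only: abs_le_square_iff)
      then show "norm ((max (u x) 0)\<^sup>2) \<le> norm ((u x)\<^sup>2)" by simp
    qed
    fix x
    have "\<bar>max (u x) 0\<bar> \<le> \<bar>u x\<bar>" by simp
    then show "(max (u x) 0)\<^sup>2 \<le> (u x)\<^sup>2" by (simp only: abs_le_square_iff)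
  qed
  also have "\<dots> \<le> 4 * R\<^sup>2 * dirichlet \<Omega> u" using P unfolding set_lint_conv[OF sl] .
  finally show "c \<le> 4 * R\<^sup>2 * dirichlet \<Omega> u" .
qed

theorem lemma2p1:
  fixes \<Omega> :: "'a::euclidean_space set"
    and f :: "real \<Rightarrow> real"
    and \<alpha> \<beta> c :: real
  assumes N3: "DIM('a) \<ge> 3"
    and dom: "smooth_bounded_domain \<Omega>"
    and star: "star_shaped_origin \<Omega>"
    and fcont: "continuous_on UNIV f"
    and f0: "f 0 = 0"
    and \<alpha>: "2 + 4 / real DIM('a) < \<alpha>"
    and \<alpha>\<beta>: "\<alpha> \<le> \<beta>"
    and \<beta>: "\<beta> < 2 * real DIM('a) / (real DIM('a) - 2)"
    and AR: "\<forall>u. u \<noteq> 0 \<longrightarrow> 0 < \<alpha> * prim f u \<and> \<alpha> * prim f u \<le> f u * u \<and> f u * u \<le> \<beta> * prim f u"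
    and c: "c > 0"
  shows "(INF u\<in>Gset \<Omega> f c. ereal (energy \<Omega> f u)) > 0
     \<and> (\<forall>us :: nat \<Rightarrow> 'a \<Rightarrow> real. (\<forall>n. us n \<in> Gset \<Omega> f c)
            \<and> limsup (\<lambda>n. ereal (energy \<Omega> f (us n))) < \<infinity>
          \<longrightarrow> (\<exists>C. \<forall>n. H1_norm2 \<Omega> (us n) \<le> C))"
proof -
  from dom have op: "open \<Omega>" and bd: "bounded \<Omega>" unfolding smooth_bounded_domain_def by auto
  obtain R where Rpos: "R > 0" and R: "\<forall>x\<in>\<Omega>. norm x \<le> R" using bd unfolding bounded_pos by blast
  define N where "N = real DIM('a)"
  have N0: "N > 0" unfolding N_def by simp
  define m where "m = N * \<alpha> / 2 - N"
  have "N * \<alpha> > N * (2 + 4 / N)" using \<alpha> N0 unfolding N_def by simp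
  moreover have "N * (2 + 4 / N) = 2 * N + 4" using N0 by (simp add: field_simps)
  ultimately have "N * \<alpha> > 2 * N + 4" by simp
  then have m2: "m > 2" unfolding m_def by simp
  define \<kappa> where "\<kappa> = 1/2 - 1 / m"
  have "1 / m < 1 / 2" using m2 by (simp add: field_simps)
  then have \<kappa>0: "\<kappa> > 0" unfolding \<kappa>_def by simp
  define K where "K = 4 * R\<^sup>2"
  have K0: "K > 0" using Rpos by (simp add: K_def)
  have E: "\<kappa> * dirichlet \<Omega> f' \<le> energy \<Omega> f f'" "c \<le> K * dirichlet \<Omega> f'"
      "(LINT x:\<Omega>|lebesgue. (f' x)\<^sup>2) \<le> K * dirichlet \<Omega> f'"
    if "f' \<in> Gset \<Omega> f c" for f'
    using key[OF op bd R that fcont f0 \<alpha> \<alpha>\<beta> AR] unfolding \<kappa>_def K_def m_def N_def by simp_all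
  have low: "\<kappa> * (c / K) \<le> energy \<Omega> f f'" if "f' \<in> Gset \<Omega> f c" for f'
  proof -
    have "c / K \<le> dirichlet \<Omega> f'" using E(2)[OF that] K0 by (simp add: field_simps)
    then have "\<kappa> * (c / K) \<le> \<kappa> * dirichlet \<Omega> f'" using \<kappa>0 by (intro mult_left_mono) auto
    then show ?thesis using E(1)[OF that] by linarith
  qed
  have "ereal (\<kappa> * (c / K)) \<le> (INF u\<in>Gset \<Omega> f c. ereal (energy \<Omega> f u))"
    by (rule INF_greatest) (use low in auto)
  moreover have "0 < ereal (\<kappa> * (c / K))" using \<kappa>0 c K0 by simp
  ultimately have part1: "(INF u\<in>Gset \<Omega> f c. ereal (energy \<Omega> f u)) > 0" by (rule order.strict_trans2[rotated])
  have part2: "\<exists>C. \<forall>n. H1_norm2 \<Omega> (us n) \<le> C"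
    if us: "\<forall>n. us n \<in> Gset \<Omega> f c" and ls: "limsup (\<lambda>n. ereal (energy \<Omega> f (us n))) < \<infinity>" for us
  proof -
    obtain C where C: "\<forall>n. energy \<Omega> f (us n) \<le> C" using limsup_finite_then_bounded[OF ls] by blast
    have "H1_norm2 \<Omega> (us n) \<le> (K + 1) * (C / \<kappa>)" for n
    proof -
      have "\<kappa> * dirichlet \<Omega> (us n) \<le> C" using E(1)[OF us[rule_format, of n]] C by (meson order.trans)
      then have Dn: "dirichlet \<Omega> (us n) \<le> C / \<kappa>" using \<kappa>0 by (simp add: field_simps)
      have "H1_norm2 \<Omega> (us n) \<le> K * dirichlet \<Omega> (us n) + dirichlet \<Omega> (us n)"
        unfolding H1_norm2_def using E(3)[OF us[rule_format, of n]] by simp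
      also have "\<dots> = (K + 1) * dirichlet \<Omega> (us n)" by (simp add: algebra_simps)
      also have "\<dots> \<le> (K + 1) * (C / \<kappa>)" using Dn K0 by (intro mult_left_mono) auto
      finally show ?thesis .
    qed
    then show ?thesis by blast
  qed
  show ?thesis using part1 part2 by blast
qed


end
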